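(* Let $x,y\ge2$ be coprime integers, $p\ge 2$, $q=pxy-1$, and let $G$ be the fundamental group of the complement of the $(p,q)$-cable of the $(x,y)$-torus knot, with canonical meridian and longitude $\mu_C,\lambda_C$ of the cable. Then for every positive integer $\beta$ and every left-orderable quotient $Q$ of $G$, the image of $\mu_C^{pq\beta-1}\lambda_C^{\beta}$ in $Q$ is not the identity.
   Context: Explicitly, $G$ is generated by $a,b,t$ with relations $a^x=b^y$ and $\mu^q\lambda^p=t^p$, where $\mu=b^ja^i$, $\lambda=\mu^{-xy}a^x$ with $xj+yi=1$; and $\mu_C=\mu^u\lambda^vt^{-v}$, $\lambda_C=\mu_C^{-pq}t^p$ with $pu-qv=1$. A left-orderable group is a nontrivial group admitting a total order invariant under left multiplication. *)

theory Defs
  imports "HOL-Algebra.Algebra"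
begin

definition left_orderable :: "('a, 'b) monoid_scheme \<Rightarrow> bool" where
  "left_orderable G \<longleftrightarrow> group G \<and> carrier G \<noteq> {\<one>\<^bsub>G\<^esub>} \<and>
    (\<exists>le :: 'a \<Rightarrow> 'a \<Rightarrow> bool.
       (\<forall>g\<in>carrier G. le g g) \<and>
       (\<forall>g\<in>carrier G. \<forall>h\<in>carrier G. le g h \<and> le h g \<longrightarrow> g = h) \<and>
       (\<forall>g\<in>carrier G. \<forall>h\<in>carrier G. \<forall>k\<in>carrier G. le g h \<and> le h k \<longrightarrow> le g k) \<and>
       (\<forall>g\<in>carrier G. \<forall>h\<in>carrier G. le g h \<or> le h g) \<and>
       (\<forall>g\<in>carrier G. \<forall>h\<in>carrier G. \<forall>k\<in>carrier G.
          le h k \<longrightarrow> le (g \<otimes>\<^bsub>G\<^esub> h) (g \<otimes>\<^bsub>G\<^esub> k)))"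

end

theory Submission
  imports Defs
begin


lemma (in group) comm_inv:
  assumes "c \<otimes> h = h \<otimes> c" "c \<in> carrier G" "h \<in> carrier G"
  shows "inv c \<otimes> h = h \<otimes> inv c"
proof -
  have e: "inv c \<otimes> (c \<otimes> h) \<otimes> inv c = inv c \<otimes> (h \<otimes> c) \<otimes> inv c" by (simp only: assms(1))
  have l: "inv c \<otimes> (c \<otimes> h) \<otimes> inv c = h \<otimes> inv c" using assms(2,3) by (simp add: m_assoc[symmetric])
  have r: "inv c \<otimes> (h \<otimes> c) \<otimes> inv c = inv c \<otimes> h" using assms(2,3) by (simp add: m_assoc)
  show ?thesis using e l r by simp
qed

lemma (in group) comm_pow1:
  assumes "g \<otimes> h = h \<otimes> g" "g \<in> carrier G" "h \<in> carrier G"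
  shows "g [^] (m::int) \<otimes> h = h \<otimes> g [^] m"
proof (cases m rule: int_cases)
  case (nonneg n)
  then show ?thesis using group_commutes_pow[OF assms] by (simp add: int_pow_int)
next
  case (neg n)
  have e: "g [^] Suc n \<otimes> h = h \<otimes> g [^] Suc n" using group_commutes_pow[OF assms] by blast
  have "inv (g [^] Suc n) \<otimes> h = h \<otimes> inv (g [^] Suc n)"
    using comm_inv[OF e] assms by simp
  then show ?thesis using neg assms by (simp add: int_pow_neg_int del: of_nat_Suc)
qed

lemma (in group) comm_pows:
  assumes "g \<otimes> h = h \<otimes> g" "g \<in> carrier G" "h \<in> carrier G"
  shows "g [^] (m::int) \<otimes> h [^] (n::int) = h [^] n \<otimes> g [^] m"
proof -
  have "g [^] m \<otimes> h = h \<otimes> g [^] m" using comm_pow1[OF assms] .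
  then have "h [^] n \<otimes> g [^] m = g [^] m \<otimes> h [^] n"
    using comm_pow1[of h "g [^] m" n] assms by simp
  then show ?thesis by simp
qed

lemma (in group) comm_mult:
  assumes "g \<otimes> h1 = h1 \<otimes> g" "g \<otimes> h2 = h2 \<otimes> g" "g \<in> carrier G" "h1 \<in> carrier G" "h2 \<in> carrier G"
  shows "g \<otimes> (h1 \<otimes> h2) = (h1 \<otimes> h2) \<otimes> g"
  using assms by (metis m_assoc)

locale lo = group G for G (structure) +
  fixes le :: "'a \<Rightarrow> 'a \<Rightarrow> bool"
  assumes refl: "g \<in> carrier G \<Longrightarrow> le g g"
    and antis: "g \<in> carrier G \<Longrightarrow> h \<in> carrier G \<Longrightarrow> le g h \<Longrightarrow> le h g \<Longrightarrow> g = h"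
    and trans: "g \<in> carrier G \<Longrightarrow> h \<in> carrier G \<Longrightarrow> k \<in> carrier G \<Longrightarrow> le g h \<Longrightarrow> le h k \<Longrightarrow> le g k"
    and total: "g \<in> carrier G \<Longrightarrow> h \<in> carrier G \<Longrightarrow> le g h \<or> le h g"
    and linv: "g \<in> carrier G \<Longrightarrow> h \<in> carrier G \<Longrightarrow> k \<in> carrier G \<Longrightarrow> le h k \<Longrightarrow> le (g \<otimes> h) (g \<otimes> k)"
begin

definition lt where "lt g h \<longleftrightarrow> le g h \<and> g \<noteq> h"

lemma lt_trans: "g \<in> carrier G \<Longrightarrow> h \<in> carrier G \<Longrightarrow> k \<in> carrier G \<Longrightarrow> lt g h \<Longrightarrow> lt h k \<Longrightarrow> lt g k"
  unfolding lt_def by (metis trans antis)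

lemma lt_le_trans: "g \<in> carrier G \<Longrightarrow> h \<in> carrier G \<Longrightarrow> k \<in> carrier G \<Longrightarrow> lt g h \<Longrightarrow> le h k \<Longrightarrow> lt g k"
  unfolding lt_def by (metis trans antis)

lemma lt_linv: "g \<in> carrier G \<Longrightarrow> h \<in> carrier G \<Longrightarrow> k \<in> carrier G \<Longrightarrow> lt h k \<Longrightarrow> lt (g \<otimes> h) (g \<otimes> k)"
  unfolding lt_def using linv by auto

lemma not_lt: "g \<in> carrier G \<Longrightarrow> h \<in> carrier G \<Longrightarrow> \<not> lt g h \<Longrightarrow> le h g"
  unfolding lt_def using total refl by blast

lemma pos_pow: "g \<in> carrier G \<Longrightarrow> lt \<one> g \<Longrightarrow> n \<ge> 1 \<Longrightarrow> lt \<one> (g [^] (n::nat))"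
proof (induction n)
  case 0 then show ?case by simp
next
  case (Suc n)
  show ?case
  proof (cases "n = 0")
    case True then show ?thesis using Suc by simp
  next
    case False
    then have "lt \<one> (g [^] n)" using Suc by simp
    then have "lt (g \<otimes> \<one>) (g \<otimes> g [^] n)" using lt_linv[OF Suc.prems(1) one_closed nat_pow_closed[OF Suc.prems(1)]] by simp
    then have "lt g (g [^] Suc n)" using Suc.prems(1) by (metis nat_pow_Suc2 r_one)
    then show ?thesis using lt_trans Suc by (meson nat_pow_closed one_closed)
  qed
qed

lemma nonneg_pow: "g \<in> carrier G \<Longrightarrow> le \<one> g \<Longrightarrow> le \<one> (g [^] (n::nat))"
proof (induction n)
  case 0 then show ?case by (simp add: refl)
next
  case (Suc n)
  then have "le (g \<otimes> \<one>) (g \<otimes> g [^] n)" using linv[OF Suc.prems(1) one_closed nat_pow_closed[OF Suc.prems(1)]] by simp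
  then have "le g (g [^] Suc n)" using Suc.prems(1) by (metis nat_pow_Suc2 r_one)
  then show ?case using trans Suc by (meson nat_pow_closed one_closed)
qed

lemma nonpos_pow: "g \<in> carrier G \<Longrightarrow> le g \<one> \<Longrightarrow> le (g [^] (n::nat)) \<one>"
proof (induction n)
  case 0 then show ?case by (simp add: refl)
next
  case (Suc n)
  then have "le (g \<otimes> g [^] n) (g \<otimes> \<one>)" using linv[OF Suc.prems(1) nat_pow_closed[OF Suc.prems(1)] one_closed] by simp
  then have "le (g [^] Suc n) g" using Suc.prems(1) by (metis nat_pow_Suc2 r_one)
  then show ?case using trans Suc by (meson nat_pow_closed one_closed)
qed

lemma torsion: assumes "g \<in> carrier G" "g [^] (n::nat) = \<one>" "n \<ge> 1" shows "g = \<one>"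
proof (rule ccontr)
  assume ne: "g \<noteq> \<one>"
  show False
  proof (cases "le \<one> g")
    case True
    then have "lt \<one> g" using ne lt_def by auto
    then show False using pos_pow[OF assms(1) _ assms(3)] assms(2) lt_def by auto
  next
    case False
    then have "le g \<one>" using total assms by auto
    then have "lt g \<one>" using ne lt_def by auto
    then have "lt (inv g \<otimes> g) (inv g \<otimes> \<one>)" using lt_linv[of "inv g" g \<one>] assms by simp
    then have "lt \<one> (inv g)" using assms by (metis l_inv inv_closed r_one)
    then have "lt \<one> (inv g [^] n)" using pos_pow assms by simp
    then show False using assms nat_pow_inv lt_def by auto
  qed
qed

lemma root_bound:
  assumes "a \<in> carrier G" "a [^] (x::nat) = z" "lt \<one> z" "r < x"
  shows "lt (a [^] r) z"
proof -
  have z: "z \<in> carrier G" using assms by auto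
  have "lt \<one> a"
  proof (rule ccontr)
    assume "\<not> lt \<one> a"
    then have "le a \<one>" using not_lt assms by simp
    then have "le z \<one>" using nonpos_pow assms by auto
    then show False using assms(3) antis z lt_def by auto
  qed
  then have "lt \<one> (a [^] (x - r))" using pos_pow assms by simp
  then have "lt (a [^] r \<otimes> \<one>) (a [^] r \<otimes> a [^] (x - r))" using lt_linv[of "a [^] r" \<one> "a [^] (x - r)"] assms by simp
  moreover have "a [^] r \<otimes> a [^] (x - r) = z" using assms nat_pow_mult[of a r "x-r"] by simp
  ultimately show ?thesis using assms by simp
qed

lemma pow_upper:
  assumes "g \<in> carrier G" "w \<in> carrier G" "g \<otimes> w = w \<otimes> g" "lt g w" "n \<ge> 1"
  shows "lt (g [^] (n::nat)) (w [^] n)"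
  using assms(5)
proof (induction n)
  case 0 then show ?case by simp
next
  case (Suc n)
  show ?case
  proof (cases "n = 0")
    case True then show ?thesis using assms by simp
  next
    case False
    then have h: "lt (g [^] n) (w [^] n)" using Suc by simp
    have "lt (g \<otimes> g [^] n) (g \<otimes> w [^] n)" using lt_linv h assms by simp
    moreover have "g \<otimes> w [^] n = w [^] n \<otimes> g"
      using group_commutes_pow[of w g n] assms by simp
    moreover have "lt (w [^] n \<otimes> g) (w [^] n \<otimes> w)" using lt_linv assms by simp
    ultimately have "lt (g \<otimes> g [^] n) (w [^] n \<otimes> w)"
      using lt_trans assms by (metis m_closed nat_pow_closed)
    then show ?thesis using assms by (metis nat_pow_Suc2 nat_pow_Suc)
  qed
qed

lemma z_mono:
  assumes "z \<in> carrier G" "le \<one> z" "(k::int) \<le> m"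
  shows "le (z [^] k) (z [^] m)"
proof -
  have "le \<one> (z [^] (nat (m - k)))" using nonneg_pow[OF assms(1,2)] by simp
  moreover have "z [^] (nat (m - k)) = z [^] (m - k)" using pow_nat[of "m-k"] assms by simp
  ultimately have "le \<one> (z [^] (m - k))" by simp
  then have "le (z [^] k \<otimes> \<one>) (z [^] k \<otimes> z [^] (m - k))" using linv[of "z [^] k" \<one> "z [^] (m - k)"] assms by simp
  moreover have "z [^] k \<otimes> z [^] (m - k) = z [^] m" using int_pow_mult[of z k "m-k"] assms by simp
  ultimately show ?thesis using assms by simp
qed

end


lemma floor_sum:
  fixes x y i j :: int
  assumes "x \<ge> 2" "y \<ge> 2" "x * j + y * i = 1"
  shows "i div x + j div y \<le> -1"
proof -
  define qi ri qj rj where "qi = i div x" "ri = i mod x" "qj = j div y" "rj = j mod y"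
  have i: "i = x * qi + ri" and j: "j = y * qj + rj" unfolding qi_ri_qj_rj_def by simp_all
  have ri: "0 \<le> ri" "ri < x" and rj: "0 \<le> rj" "rj < y" unfolding qi_ri_qj_rj_def using assms by simp_all
  have e: "1 = x * y * (qi + qj) + x * rj + y * ri" using assms(3) i j by (simp add: algebra_simps)
  have ri0: "ri \<noteq> 0"
  proof
    assume "ri = 0"
    then have "1 = x * (y * (qi + qj) + rj)" using e by (simp add: algebra_simps)
    then have "x dvd 1" by (metis dvd_triv_left)
    then show False using assms by auto
  qed
  have rj0: "rj \<noteq> 0"
  proof
    assume "rj = 0"
    then have "1 = y * (x * (qi + qj) + ri)" using e by (simp add: algebra_simps)
    then have "y dvd 1" by (metis dvd_triv_left)
    then show False using assms by auto
  qed
  have "rj \<ge> 1" "ri \<ge> 1" using rj rj0 ri ri0 by auto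
  then have "x * rj \<ge> x * 1" "y * ri \<ge> y * 1" using assms mult_left_mono[of 1 rj x] mult_left_mono[of 1 ri y] by simp_all
  then have "x * rj \<ge> 2 \<and> y * ri \<ge> 2" using assms by linarith
  then have neg: "x * y * (qi + qj) < 0" using e by linarith
  have "qi + qj < 0"
  proof (rule ccontr)
    assume "\<not> qi + qj < 0"
    then have "x * y * (qi + qj) \<ge> 0" using assms by simp
    then show False using neg by simp
  qed
  then show ?thesis unfolding qi_ri_qj_rj_def by simp
qed

context lo begin

lemma ord_main:
  fixes x y i j N M :: int
  assumes ab: "a \<in> carrier G" "b \<in> carrier G"
    and ca: "z \<otimes> a = a \<otimes> z" and cb: "z \<otimes> b = b \<otimes> z"
    and ax: "a [^] x = z" and bx: "b [^] y = z"
    and xy: "x \<ge> 2" "y \<ge> 2" "x * j + y * i = 1"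
    and mN: "(b [^] j \<otimes> a [^] i) [^] N = z [^] M"
    and N: "N \<ge> 1" "M \<ge> N" and z1: "lt \<one> z"
  shows False
proof -
  have z: "z \<in> carrier G" using ax ab by auto
  define qi ri qj rj where "qi = i div x" "ri = i mod x" "qj = j div y" "rj = j mod y"
  have i: "i = x * qi + ri" and j: "j = y * qj + rj" unfolding qi_ri_qj_rj_def by simp_all
  have ri: "0 \<le> ri" "ri < x" and rj: "0 \<le> rj" "rj < y" unfolding qi_ri_qj_rj_def using xy by simp_all
  have qq: "qi + qj \<le> -1" using floor_sum[OF xy] unfolding qi_ri_qj_rj_def by simp
  have ai: "a [^] i = z [^] qi \<otimes> a [^] ri"
  proof -
    have "a [^] i = a [^] (x * qi) \<otimes> a [^] ri" by (subst i, rule int_pow_mult[OF ab(1)])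
    moreover have "a [^] (x * qi) = z [^] qi" using int_pow_pow[OF ab(1), of x qi] ax by simp
    ultimately show ?thesis by simp
  qed
  have bj: "b [^] j = z [^] qj \<otimes> b [^] rj"
  proof -
    have "b [^] j = b [^] (y * qj) \<otimes> b [^] rj" by (subst j, rule int_pow_mult[OF ab(2)])
    moreover have "b [^] (y * qj) = z [^] qj" using int_pow_pow[OF ab(2), of y qj] bx by simp
    ultimately show ?thesis by simp
  qed
  have ar: "lt (a [^] ri) z"
  proof -
    have "a [^] (nat x) = z" using ax pow_nat[of x] xy by simp
    then have "lt (a [^] (nat ri)) z" using root_bound[OF ab(1) _ z1, of "nat x" "nat ri"] ri by simp
    then show ?thesis using pow_nat[of ri] ri by simp
  qed
  have br: "lt (b [^] rj) z"
  proof -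
    have "b [^] (nat y) = z" using bx pow_nat[of y] xy by simp
    then have "lt (b [^] (nat rj)) z" using root_bound[OF ab(2) _ z1, of "nat y" "nat rj"] rj by simp
    then show ?thesis using pow_nat[of rj] rj by simp
  qed
  define A where "A = a [^] ri"
  define B where "B = b [^] rj"
  have AB: "A \<in> carrier G" "B \<in> carrier G" unfolding A_def B_def using ab by auto
  have czB: "z \<otimes> B = B \<otimes> z" unfolding B_def using comm_pow1[OF cb[symmetric] ab(2) z] by simp
  have m: "b [^] j \<otimes> a [^] i = z [^] (qi + qj) \<otimes> (B \<otimes> A)"
  proof -
    have "b [^] j \<otimes> a [^] i = z [^] qj \<otimes> (B \<otimes> z [^] qi) \<otimes> A"
      using ai bj AB z unfolding A_def B_def by (simp add: m_assoc)
    also have "B \<otimes> z [^] qi = z [^] qi \<otimes> B" using comm_pow1[OF czB z AB(2)] by simp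
    also have "z [^] qj \<otimes> (z [^] qi \<otimes> B) \<otimes> A = (z [^] qj \<otimes> z [^] qi) \<otimes> (B \<otimes> A)"
      using AB z by (simp add: m_assoc)
    also have "z [^] qj \<otimes> z [^] qi = z [^] (qi + qj)" using int_pow_mult[OF z, of qj qi] by (simp add: add.commute)
    finally show ?thesis .
  qed
  have lBA: "lt (B \<otimes> A) (z \<otimes> z)"
  proof -
    have "lt (B \<otimes> A) (B \<otimes> z)" using lt_linv[OF AB(2) AB(1) z] ar A_def by simp
    moreover have "lt (z \<otimes> B) (z \<otimes> z)" using lt_linv[OF z AB(2) z] br B_def by simp
    ultimately have "lt (B \<otimes> z) (z \<otimes> z)" using czB by simp
    with \<open>lt (B \<otimes> A) (B \<otimes> z)\<close> show ?thesis
      using lt_trans[OF m_closed[OF AB(2,1)] m_closed[OF AB(2) z] m_closed[OF z z]] by blast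
  qed
  define c where "c = qi + qj + 2"
  define w where "w = z [^] c"
  have w: "w \<in> carrier G" unfolding w_def using z by simp
  define g where "g = b [^] j \<otimes> a [^] i"
  have g: "g \<in> carrier G" unfolding g_def using ab by simp
  have gw: "lt g w"
  proof -
    have "lt (z [^] (qi + qj) \<otimes> (B \<otimes> A)) (z [^] (qi + qj) \<otimes> (z \<otimes> z))"
      using lt_linv[OF int_pow_closed[OF z] m_closed[OF AB(2,1)] m_closed[OF z z] lBA] .
    moreover have "z [^] (qi + qj) \<otimes> (z \<otimes> z) = w"
      unfolding w_def c_def using z int_pow_mult[OF z, of "qi+qj" 1] int_pow_mult[OF z, of "qi+qj+1" 1]
      by (simp add: m_assoc add.commute)
    ultimately show ?thesis using m g_def by simp
  qed
  have czg: "z \<otimes> g = g \<otimes> z"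
  proof -
    have 1: "z \<otimes> b [^] j = b [^] j \<otimes> z" using comm_pow1[OF cb[symmetric] ab(2) z] by simp
    have 2: "z \<otimes> a [^] i = a [^] i \<otimes> z" using comm_pow1[OF ca[symmetric] ab(1) z] by simp
    show ?thesis unfolding g_def using comm_mult[OF 1 2] z ab by simp
  qed
  have cgw: "g \<otimes> w = w \<otimes> g" unfolding w_def using comm_pow1[OF czg z g] by simp
  have "lt (g [^] (nat N)) (w [^] (nat N))" using pow_upper[OF g w cgw gw, of "nat N"] N by linarith
  then have "lt (g [^] N) (w [^] N)" using pow_nat[of N] N by simp
  then have "lt (z [^] M) (z [^] (c * N))" using mN g_def w_def int_pow_pow[OF z] by simp
  moreover have "c * N \<le> M"
  proof -
    have "c \<le> 1" using qq c_def by simp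
    then have "c * N \<le> 1 * N" using N mult_right_mono[of c 1 N] by simp
    then show ?thesis using N by linarith
  qed
  then have "le (z [^] (c * N)) (z [^] M)" using z_mono[OF z _ \<open>c * N \<le> M\<close>] z1 unfolding lt_def by blast
  ultimately show False using antis[OF int_pow_closed[OF z] int_pow_closed[OF z]] unfolding lt_def by blast
qed

end


lemma (in group) fm:
  assumes "g \<otimes> h = h \<otimes> g" "g \<in> carrier G" "h \<in> carrier G"
  shows "(g [^] (m1::int) \<otimes> h [^] (n1::int)) \<otimes> (g [^] (m2::int) \<otimes> h [^] (n2::int))
         = g [^] (m1 + m2) \<otimes> h [^] (n1 + n2)"
proof -
  have c: "h [^] n1 \<otimes> g [^] m2 = g [^] m2 \<otimes> h [^] n1" using comm_pows[OF assms(1)[symmetric] assms(3,2)] by simp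
  have "(g [^] m1 \<otimes> h [^] n1) \<otimes> (g [^] m2 \<otimes> h [^] n2) = g [^] m1 \<otimes> (h [^] n1 \<otimes> g [^] m2) \<otimes> h [^] n2"
    using assms by (simp add: m_assoc)
  also have "\<dots> = (g [^] m1 \<otimes> g [^] m2) \<otimes> (h [^] n1 \<otimes> h [^] n2)" unfolding c using assms by (simp add: m_assoc)
  also have "\<dots> = g [^] (m1 + m2) \<otimes> h [^] (n1 + n2)" using assms by (simp add: int_pow_mult)
  finally show ?thesis .
qed

lemma (in group) fp:
  assumes "g \<otimes> h = h \<otimes> g" "g \<in> carrier G" "h \<in> carrier G"
  shows "(g [^] (m::int) \<otimes> h [^] (n::int)) [^] (k::int) = g [^] (m * k) \<otimes> h [^] (n * k)"
proof -
  have "(g [^] m \<otimes> h [^] n) [^] k = (g [^] m) [^] k \<otimes> (h [^] n) [^] k"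
    using int_pow_mult_distrib[OF comm_pows[OF assms]] assms by simp
  then show ?thesis using assms by (simp add: int_pow_pow)
qed



theorem corollary3p4:
  fixes x y p q i j u v \<beta> :: int
    and Q :: "('g, 'c) monoid_scheme" (structure)
    and a b t mu lam muC lamC :: 'g
  assumes "x \<ge> 2" and "y \<ge> 2" and "coprime x y" and "p \<ge> 2"
    and "q = p * x * y - 1"
    and "x * j + y * i = 1" and "p * u - q * v = 1"
    and "\<beta> \<ge> 1"
    and "group Q" and "left_orderable Q"
    and "a \<in> carrier Q" and "b \<in> carrier Q" and "t \<in> carrier Q"
    and "carrier Q = generate Q {a, b, t}"
    and "a [^] x = b [^] y"
    and "mu = b [^] j \<otimes> a [^] i"
    and "lam = mu [^] (- (x * y)) \<otimes> a [^] x"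
    and "mu [^] q \<otimes> lam [^] p = t [^] p"
    and "muC = mu [^] u \<otimes> lam [^] v \<otimes> t [^] (- v)"
    and "lamC = muC [^] (- (p * q)) \<otimes> t [^] p"
  shows "muC [^] (p * q * \<beta> - 1) \<otimes> lamC [^] \<beta> \<noteq> \<one>"
proof
  note A = assms
  assume E1: "muC [^] (p * q * \<beta> - 1) \<otimes> lamC [^] \<beta> = \<one>"
  interpret group Q by fact
  have "\<exists>le :: 'g \<Rightarrow> 'g \<Rightarrow> bool.
       (\<forall>g\<in>carrier Q. le g g) \<and>
       (\<forall>g\<in>carrier Q. \<forall>h\<in>carrier Q. le g h \<and> le h g \<longrightarrow> g = h) \<and>
       (\<forall>g\<in>carrier Q. \<forall>h\<in>carrier Q. \<forall>k\<in>carrier Q. le g h \<and> le h k \<longrightarrow> le g k) \<and>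
       (\<forall>g\<in>carrier Q. \<forall>h\<in>carrier Q. le g h \<or> le h g) \<and>
       (\<forall>g\<in>carrier Q. \<forall>h\<in>carrier Q. \<forall>k\<in>carrier Q.
          le h k \<longrightarrow> le (g \<otimes> h) (g \<otimes> k))"
    using A(10) unfolding left_orderable_def by (rule conjunct2[THEN conjunct2])
  then obtain le :: "'g \<Rightarrow> 'g \<Rightarrow> bool" where leall:
       "(\<forall>g\<in>carrier Q. le g g) \<and>
       (\<forall>g\<in>carrier Q. \<forall>h\<in>carrier Q. le g h \<and> le h g \<longrightarrow> g = h) \<and>
       (\<forall>g\<in>carrier Q. \<forall>h\<in>carrier Q. \<forall>k\<in>carrier Q. le g h \<and> le h k \<longrightarrow> le g k) \<and>
       (\<forall>g\<in>carrier Q. \<forall>h\<in>carrier Q. le g h \<or> le h g) \<and>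
       (\<forall>g\<in>carrier Q. \<forall>h\<in>carrier Q. \<forall>k\<in>carrier Q.
          le h k \<longrightarrow> le (g \<otimes> h) (g \<otimes> k))" by (elim exE)
  note le = leall[THEN conjunct1] leall[THEN conjunct2, THEN conjunct1]
    leall[THEN conjunct2, THEN conjunct2, THEN conjunct1]
    leall[THEN conjunct2, THEN conjunct2, THEN conjunct2, THEN conjunct1]
    leall[THEN conjunct2, THEN conjunct2, THEN conjunct2, THEN conjunct2]
  have nontriv: "carrier Q \<noteq> {\<one>}" using A(10) unfolding left_orderable_def by (elim conjE)
  have lo1: "lo Q le"
    apply (intro lo.intro lo_axioms.intro A(9))
    subgoal using le(1) by blast
    subgoal using le(2) by blast
    subgoal using le(3) by blast
    subgoal using le(4) by blast
    subgoal using le(5) by blast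
    done
  have lo2: "lo Q (\<lambda>g h. le h g)"
    apply (intro lo.intro lo_axioms.intro A(9))
    subgoal using le(1) by blast
    subgoal using le(2) by blast
    subgoal using le(3) by blast
    subgoal using le(4) by blast
    subgoal using le(5) by blast
    done
  interpret L: lo Q le by (rule lo1)
  have a: "a \<in> carrier Q" and b: "b \<in> carrier Q" and t: "t \<in> carrier Q" using A(11-13) by auto
  define z where "z = a [^] x"
  have z: "z \<in> carrier Q" unfolding z_def using a by simp
  have zb: "z = b [^] y" unfolding z_def using A(15) .
  have cza: "z \<otimes> a = a \<otimes> z" unfolding z_def using comm_pow1[of a a x] a by simp
  have czb: "z \<otimes> b = b \<otimes> z" unfolding zb using comm_pow1[of b b y] b by simp
  have mu: "mu \<in> carrier Q" using A(16) a b by simp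
  have czmu: "z \<otimes> mu = mu \<otimes> z"
  proof -
    have 1: "z \<otimes> b [^] j = b [^] j \<otimes> z" using comm_pow1[OF czb[symmetric] b z] by simp
    have 2: "z \<otimes> a [^] i = a [^] i \<otimes> z" using comm_pow1[OF cza[symmetric] a z] by simp
    show ?thesis unfolding A(16) using comm_mult[OF 1 2] z a b by simp
  qed
  have lamz: "lam = mu [^] (- (x * y)) \<otimes> z" using A(17) z_def by simp
  have lam: "lam \<in> carrier Q" using lamz mu z by simp
  have cml: "mu \<otimes> lam = lam \<otimes> mu"
  proof -
    have 1: "mu \<otimes> mu [^] (- (x * y)) = mu [^] (- (x * y)) \<otimes> mu" using comm_pow1[of mu mu "- (x * y)"] mu by simp
    show ?thesis unfolding lamz using comm_mult[OF 1 czmu[symmetric]] mu z by simp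
  qed
  define T2 where "T2 = t [^] p"
  have T2: "T2 \<in> carrier Q" unfolding T2_def using t by simp
  have T2f: "T2 = mu [^] q \<otimes> lam [^] p" unfolding T2_def using A(18) by simp
  have cmuT: "mu \<otimes> T2 = T2 \<otimes> mu"
  proof -
    have 1: "mu \<otimes> mu [^] q = mu [^] q \<otimes> mu" using comm_pow1[of mu mu q] mu by simp
    have 2: "mu \<otimes> lam [^] p = lam [^] p \<otimes> mu" using comm_pow1[OF cml[symmetric] lam mu] by simp
    show ?thesis unfolding T2f using comm_mult[OF 1 2] mu lam by simp
  qed
  have clamT: "lam \<otimes> T2 = T2 \<otimes> lam"
  proof -
    have 1: "lam \<otimes> mu [^] q = mu [^] q \<otimes> lam" using comm_pow1[OF cml mu lam] by simp
    have 2: "lam \<otimes> lam [^] p = lam [^] p \<otimes> lam" using comm_pow1[of lam lam p] lam by simp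
    show ?thesis unfolding T2f using comm_mult[OF 1 2] mu lam by simp
  qed
  have muC: "muC \<in> carrier Q" using A(19) mu lam t by simp
  have cTmuC: "T2 \<otimes> muC = muC \<otimes> T2"
  proof -
    have 1: "T2 \<otimes> mu [^] u = mu [^] u \<otimes> T2" using comm_pow1[OF cmuT mu T2] by simp
    have 2: "T2 \<otimes> lam [^] v = lam [^] v \<otimes> T2" using comm_pow1[OF clamT lam T2] by simp
    have 3: "T2 \<otimes> t [^] (- v) = t [^] (- v) \<otimes> T2" unfolding T2_def using comm_pows[of t t p "- v"] t by simp
    have 4: "T2 \<otimes> (mu [^] u \<otimes> lam [^] v) = (mu [^] u \<otimes> lam [^] v) \<otimes> T2"
      using comm_mult[OF 1 2] T2 mu lam by simp
    show ?thesis unfolding A(19) using comm_mult[OF 4 3] T2 mu lam t by simp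
  qed
  have lamC: "lamC = muC [^] (- (p * q)) \<otimes> T2" using A(20) T2_def by simp
  have lamCb: "lamC [^] \<beta> = muC [^] (- (p * q) * \<beta>) \<otimes> T2 [^] \<beta>"
  proof -
    have c: "muC [^] (- (p * q)) \<otimes> T2 = T2 \<otimes> muC [^] (- (p * q))"
      using comm_pow1[OF cTmuC[symmetric] muC T2] by simp
    show ?thesis unfolding lamC using int_pow_mult_distrib[OF c] muC T2 by (simp add: int_pow_pow)
  qed
  have "muC [^] (p * q * \<beta> - 1) \<otimes> lamC [^] \<beta> = (muC [^] (p * q * \<beta> - 1) \<otimes> muC [^] (- (p * q) * \<beta>)) \<otimes> T2 [^] \<beta>"
    unfolding lamCb using muC T2 by (simp add: m_assoc)
  also have "muC [^] (p * q * \<beta> - 1) \<otimes> muC [^] (- (p * q) * \<beta>) = muC [^] (-1::int)"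
    using int_pow_mult[OF muC, of "p * q * \<beta> - 1" "- (p * q) * \<beta>"] by simp
  finally have "inv muC \<otimes> T2 [^] \<beta> = \<one>" using E1 muC int_pow_neg[OF muC, of 1] by simp
  then have muCe: "muC = t [^] (p * \<beta>)"
    using muC T2 unfolding T2_def by (metis inv_closed int_pow_closed inv_inv inv_equality int_pow_pow[OF t])
  have P1: "mu [^] u \<otimes> lam [^] v = t [^] (p * \<beta> + v)"
  proof -
    have "muC \<otimes> t [^] v = mu [^] u \<otimes> lam [^] v \<otimes> (t [^] (- v) \<otimes> t [^] v)"
      unfolding A(19) using mu lam t by (simp add: m_assoc)
    also have "t [^] (- v) \<otimes> t [^] v = \<one>" using int_pow_mult[OF t, of "-v" v] by simp
    finally show ?thesis using muCe int_pow_mult[OF t, of "p * \<beta>" v] mu lam by simp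
  qed
  have P2: "mu [^] q \<otimes> lam [^] p = t [^] p" using A(18) .
  have mue: "mu = t [^] ((p * \<beta> + v) * p + p * (- v))"
  proof -
    have "(mu [^] u \<otimes> lam [^] v) [^] p \<otimes> (mu [^] q \<otimes> lam [^] p) [^] (- v)
        = mu [^] (u * p + q * (- v)) \<otimes> lam [^] (v * p + p * (- v))"
      using fp[OF cml mu lam] fm[OF cml mu lam] by simp
    also have "u * p + q * (- v) = 1" using A(7) by (simp add: algebra_simps)
    also have "v * p + p * (- v) = 0" by simp
    finally have "mu = (mu [^] u \<otimes> lam [^] v) [^] p \<otimes> (mu [^] q \<otimes> lam [^] p) [^] (- v)" using mu lam by simp
    also have "\<dots> = t [^] ((p * \<beta> + v) * p) \<otimes> t [^] (p * (- v))" unfolding P1 P2 using int_pow_pow[OF t] by simp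
    finally show ?thesis using int_pow_mult[OF t, of "(p * \<beta> + v) * p" "p * (- v)"] by (simp only:)
  qed
  have lame: "lam = t [^] ((p * \<beta> + v) * (- q) + p * u)"
  proof -
    have "(mu [^] u \<otimes> lam [^] v) [^] (- q) \<otimes> (mu [^] q \<otimes> lam [^] p) [^] u
        = mu [^] (u * (- q) + q * u) \<otimes> lam [^] (v * (- q) + p * u)"
      using fp[OF cml mu lam] fm[OF cml mu lam] by simp
    also have "v * (- q) + p * u = 1" using A(7) by (simp add: algebra_simps)
    also have "u * (- q) + q * u = 0" by simp
    finally have "lam = (mu [^] u \<otimes> lam [^] v) [^] (- q) \<otimes> (mu [^] q \<otimes> lam [^] p) [^] u" using mu lam by simp
    also have "\<dots> = t [^] ((p * \<beta> + v) * (- q)) \<otimes> t [^] (p * u)" unfolding P1 P2 using int_pow_pow[OF t] by simp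
    finally show ?thesis using int_pow_mult[OF t, of "(p * \<beta> + v) * (- q)" "p * u"] by (simp only:)
  qed
  define N where "N = 1 + p * \<beta>"
  define M where "M = p * p * \<beta>"
  have zmul: "z = mu [^] (x * y) \<otimes> lam"
  proof -
    have "mu [^] (x * y) \<otimes> lam = (mu [^] (x * y) \<otimes> mu [^] (- (x * y))) \<otimes> z"
      unfolding lamz using mu z by (simp add: m_assoc)
    also have "mu [^] (x * y) \<otimes> mu [^] (- (x * y)) = \<one>" using int_pow_mult[OF mu, of "x*y" "-(x*y)"] by simp
    finally show ?thesis using z by simp
  qed
  have ze: "z = t [^] N"
  proof -
    have "z = t [^] (((p * \<beta> + v) * p + p * (- v)) * (x * y) + ((p * \<beta> + v) * (- q) + p * u))"
      unfolding zmul using int_pow_pow[OF t] int_pow_mult[OF t] mue lame by simp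
    also have "((p * \<beta> + v) * p + p * (- v)) * (x * y) + ((p * \<beta> + v) * (- q) + p * u) = N"
    proof -
      have "p * u = 1 + q * v" using A(7) by simp
      then show ?thesis unfolding N_def A(5) by (simp add: algebra_simps)
    qed
    finally show ?thesis .
  qed
  have mN: "(b [^] j \<otimes> a [^] i) [^] N = z [^] M"
  proof -
    have "mu = t [^] M" unfolding M_def using mue by (simp add: algebra_simps)
    then have "mu [^] N = t [^] (M * N)" using int_pow_pow[OF t] by simp
    also have "\<dots> = z [^] M" unfolding ze using int_pow_pow[OF t] by (simp add: mult.commute)
    finally show ?thesis using A(16) by simp
  qed
  have pb: "p * \<beta> \<ge> 2" using A(4,8) mult_mono[of 2 p 1 \<beta>] by simp
  have N1: "N \<ge> 1" unfolding N_def using pb by simp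
  have NM: "M \<ge> N"
  proof -
    have "p * (p * \<beta>) \<ge> 2 * (p * \<beta>)" using A(4) pb mult_right_mono[of 2 p "p * \<beta>"] by simp
    then show ?thesis unfolding N_def M_def using pb by (simp add: mult.assoc)
  qed
  have z1: "z \<noteq> \<one>"
  proof
    assume z1: "z = \<one>"
    have "t [^] (nat N) = \<one>" using ze z1 pow_nat[of N] N1 by simp
    moreover have "nat N \<ge> 1" using N1 by linarith
    ultimately have t1: "t = \<one>" using L.torsion[OF t] by blast
    have "a [^] (nat x) = \<one>" using z_def z1 pow_nat[of x] A(1) by simp
    moreover have "nat x \<ge> 1" using A(1) by linarith
    ultimately have a1: "a = \<one>" using L.torsion[OF a] by blast
    have "b [^] (nat y) = \<one>" using zb z1 pow_nat[of y] A(2) by simp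
    moreover have "nat y \<ge> 1" using A(2) by linarith
    ultimately have b1: "b = \<one>" using L.torsion[OF b] by blast
    have "carrier Q = generate Q {\<one>}" using A(14) a1 b1 t1 by simp
    then show False using generate_one nontriv by simp
  qed
  show False
  proof (cases "le \<one> z")
    case True
    then have "L.lt \<one> z" using z1 L.lt_def by auto
    then show False using L.ord_main[OF a b cza czb z_def[symmetric] zb[symmetric] A(1,2,6) mN N1 NM] by blast
  next
    case False
    then have "le z \<one>" using le(4) z by auto
    then have "lo.lt (\<lambda>g h. le h g) \<one> z" using z1 lo.lt_def[OF lo2] by auto
    then show False using lo.ord_main[OF lo2 a b cza czb z_def[symmetric] zb[symmetric] A(1,2,6) mN N1 NM] by blast
  qed
qed


end
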